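(* There exists a sum game instance $\mathcal R=(\mathbf N,G,\mathcal P)$ that has no Nash-routing.
   Context: A routing game $(\mathbf N,G,\mathcal P)$: players $\{1,\dots,N\}$, a finite graph $G$, and for each player $i$ a nonempty finite set $\mathcal P_i$ of paths from a source $u_i$ to a destination $v_i$. A routing is $\mathbf p=[p_1,\dots,p_N]$, $p_i\in\mathcal P_i$. $C_e(\mathbf p)$ = number of players whose path uses edge $e$; $C_i(\mathbf p)=\max_{e\in p_i}C_e(\mathbf p)$; $D_i(\mathbf p)=|p_i|$ (number of edges). A sum game has player cost $pc_i(\mathbf p)=C_i(\mathbf p)+D_i(\mathbf p)$ (and social cost $C(\mathbf p)+D(\mathbf p)$, where $C=\max_eC_e$, $D=\max_i|p_i|$). A Nash-routing is a routing $\mathbf p$ with $pc_i(\mathbf p)\le pc_i(p_i';\mathbf p_{-i})$ for every player $i$ and every $p_i'\in\mathcal P_i$, where $(p_i';\mathbf p_{-i})$ replaces $p_i$ by $p_i'$. *)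

theory Defs
  imports Main
begin

definition graph :: "nat set set \<Rightarrow> bool" where
  "graph G \<longleftrightarrow> finite G \<and> (\<forall>e\<in>G. card e = 2)"

definition path_edges :: "nat list \<Rightarrow> nat set set" where
  "path_edges xs = {{xs ! k, xs ! Suc k} | k. Suc k < length xs}"

definition path_len :: "nat list \<Rightarrow> nat" where
  "path_len xs = length xs - 1"

definition is_path :: "nat set set \<Rightarrow> nat \<Rightarrow> nat \<Rightarrow> nat list \<Rightarrow> bool" where
  "is_path G u v xs \<longleftrightarrow> xs \<noteq> [] \<and> hd xs = u \<and> last xs = v \<and> distinct xs \<and>
     (\<forall>k. Suc k < length xs \<longrightarrow> {xs ! k, xs ! Suc k} \<in> G)"

definition routing_game ::
  "nat \<Rightarrow> nat set set \<Rightarrow> (nat \<Rightarrow> nat) \<Rightarrow> (nat \<Rightarrow> nat) \<Rightarrow> (nat \<Rightarrow> nat list set) \<Rightarrow> bool" where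
  "routing_game N G u v P \<longleftrightarrow> graph G \<and>
     (\<forall>i\<in>{1..N}. P i \<noteq> {} \<and> finite (P i) \<and> (\<forall>p\<in>P i. is_path G (u i) (v i) p))"

definition is_routing :: "nat \<Rightarrow> (nat \<Rightarrow> nat list set) \<Rightarrow> (nat \<Rightarrow> nat list) \<Rightarrow> bool" where
  "is_routing N P r \<longleftrightarrow> (\<forall>i\<in>{1..N}. r i \<in> P i)"

definition edge_cong :: "nat \<Rightarrow> (nat \<Rightarrow> nat list) \<Rightarrow> nat set \<Rightarrow> nat" where
  "edge_cong N r e = card {i\<in>{1..N}. e \<in> path_edges (r i)}"

definition player_cong :: "nat \<Rightarrow> (nat \<Rightarrow> nat list) \<Rightarrow> nat \<Rightarrow> nat" where
  "player_cong N r i = Max (insert 0 (edge_cong N r ` path_edges (r i)))"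

definition sum_cost :: "nat \<Rightarrow> (nat \<Rightarrow> nat list) \<Rightarrow> nat \<Rightarrow> nat" where
  "sum_cost N r i = player_cong N r i + path_len (r i)"

definition nash_routing_sum :: "nat \<Rightarrow> (nat \<Rightarrow> nat list set) \<Rightarrow> (nat \<Rightarrow> nat list) \<Rightarrow> bool" where
  "nash_routing_sum N P r \<longleftrightarrow> is_routing N P r \<and>
     (\<forall>i\<in>{1..N}. \<forall>p\<in>P i. sum_cost N r i \<le> sum_cost N (r(i := p)) i)"

end

theory Submission
  imports Defs
begin

definition "p1a = [10,8,9,6,7,11::nat]"
definition "p1b = [10,0,1,20,2,3,21,4,5,22,11::nat]"
definition "p2a = [12,2,3,23,4,5,24,6,7,13::nat]"
definition "p2b = [12,0,1,25,26,27,28,29,30,31,32,33,34,35,13::nat]"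
definition "p3a = [14,2,3,38,39,40,41,42,43,44,45,46,47,48,15::nat]"
definition "p3b = [14,0,1,36,4,5,37,6,7,15::nat]"
definition bg :: "nat \<Rightarrow> nat list" where
  "bg j = (if j = 4 then [4,5] else if j \<le> 9 then [6,7] else [8,9])"
definition rr :: "nat list \<Rightarrow> nat list \<Rightarrow> nat list \<Rightarrow> nat \<Rightarrow> nat list" where
  "rr a b c j = (if j = 1 then a else if j = 2 then b else if j = 3 then c else bg j)"

lemma pe_Nil: "path_edges [] = {}" by (simp add: path_edges_def)
lemma pe_one: "path_edges [a] = {}" by (simp add: path_edges_def)
lemma pe_cons2: "path_edges (a # b # xs) = insert {a,b} (path_edges (b # xs))"
proof (rule set_eqI, rule iffI)
  fix e assume "e \<in> path_edges (a#b#xs)"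
  then obtain k where e: "e = {(a#b#xs)!k, (a#b#xs)!Suc k}" and k: "Suc k < length (a#b#xs)"
    unfolding path_edges_def by blast
  show "e \<in> insert {a,b} (path_edges (b#xs))"
  proof (cases k)
    case 0 then show ?thesis using e by simp
  next
    case (Suc k') then have "e = {(b#xs)!k', (b#xs)!Suc k'}" "Suc k' < length (b#xs)" using e k by auto
    then show ?thesis unfolding path_edges_def by blast
  qed
next
  fix e assume "e \<in> insert {a,b} (path_edges (b#xs))"
  then show "e \<in> path_edges (a#b#xs)"
  proof
    assume "e = {a,b}" then have "e = {(a#b#xs)!0, (a#b#xs)!Suc 0}" by simp
    then show ?thesis unfolding path_edges_def by force
  next
    assume "e \<in> path_edges (b#xs)"
    then obtain k where "e = {(b#xs)!k, (b#xs)!Suc k}" "Suc k < length (b#xs)"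
      unfolding path_edges_def by blast
    then have "e = {(a#b#xs)!Suc k, (a#b#xs)!Suc (Suc k)}" "Suc (Suc k) < length (a#b#xs)" by auto
    then show ?thesis unfolding path_edges_def by blast
  qed
qed

lemma card_filter: "card {j\<in>{1..n}. P j} = length (filter P [1..<Suc n])"
proof -
  have "{j\<in>{1..n}. P j} = set (filter P [1..<Suc n])" by auto
  then show ?thesis by (simp only: distinct_card[OF distinct_filter[OF distinct_upt]])
qed

lemmas comp = sum_cost_def player_cong_def edge_cong_def card_filter pe_Nil pe_one pe_cons2
  p1a_def p1b_def p2a_def p2b_def p3a_def p3b_def rr_def bg_def path_len_def doubleton_eq_iff


lemma card_sum: "card {j\<in>{1..n}. P j} = (\<Sum>j\<leftarrow>[1..<Suc n]. if P j then 1 else 0)"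
proof -
  have "card {j\<in>{1..n}. P j} = (\<Sum>j\<in>{j\<in>{1..n}. P j}. 1)" by simp
  also have "\<dots> = (\<Sum>j\<in>{1..n}. if P j then 1 else 0)" by (rule sum.inter_filter) simp
  also have "\<dots> = (\<Sum>j\<in>set [1..<Suc n]. if P j then 1 else 0)"
    by (simp only: set_upt atLeastLessThanSuc_atLeastAtMost)
  also have "\<dots> = (\<Sum>j\<leftarrow>[1..<Suc n]. if P j then 1 else 0)"
    by (rule sum_list_distinct_conv_sum_set[symmetric]) simp
  finally show ?thesis .
qed

lemma ec_rr: "edge_cong 16 (rr a b c) e =
  (if e \<in> path_edges a then 1 else 0) + (if e \<in> path_edges b then 1 else 0) + (if e \<in> path_edges c then 1 else 0)
  + (if e = {4,5} then 1 else 0) + (if e = {6,7} then 5 else 0) + (if e = {8,9} then 7 else 0)"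
  unfolding edge_cong_def card_sum by (simp add: rr_def bg_def pe_cons2 pe_one upt_rec)

lemma sc_rr1: "sum_cost 16 (rr a b c) 1 = Max (insert 0 (edge_cong 16 (rr a b c) ` path_edges a)) + path_len a"
  by (simp add: sum_cost_def player_cong_def rr_def)
lemma sc_rr1': "sum_cost 16 (rr a b c) (Suc 0) = Max (insert 0 (edge_cong 16 (rr a b c) ` path_edges a)) + path_len a"
  by (simp add: sum_cost_def player_cong_def rr_def)
lemma sc_rr2: "sum_cost 16 (rr a b c) 2 = Max (insert 0 (edge_cong 16 (rr a b c) ` path_edges b)) + path_len b"
  by (simp add: sum_cost_def player_cong_def rr_def)
lemma sc_rr3: "sum_cost 16 (rr a b c) 3 = Max (insert 0 (edge_cong 16 (rr a b c) ` path_edges c)) + path_len c"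
  by (simp add: sum_cost_def player_cong_def rr_def)

lemmas comp2 = sc_rr1 sc_rr2 sc_rr3 ec_rr pe_Nil pe_one pe_cons2
  p1a_def p1b_def p2a_def p2b_def p3a_def p3b_def path_len_def doubleton_eq_iff

lemma pe_p1a: "path_edges p1a = {{10,8},{8,9},{9,6},{6,7},{7,11}}"
  by (simp add: p1a_def pe_cons2 pe_one)
lemma pl_p1a: "path_len p1a = 5"
  by (simp add: p1a_def path_len_def)
lemma pe_p1b: "path_edges p1b = {{10,0},{0,1},{1,20},{20,2},{2,3},{3,21},{21,4},{4,5},{5,22},{22,11}}"
  by (simp add: p1b_def pe_cons2 pe_one)
lemma pl_p1b: "path_len p1b = 10"
  by (simp add: p1b_def path_len_def)
lemma pe_p2a: "path_edges p2a = {{12,2},{2,3},{3,23},{23,4},{4,5},{5,24},{24,6},{6,7},{7,13}}"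
  by (simp add: p2a_def pe_cons2 pe_one)
lemma pl_p2a: "path_len p2a = 9"
  by (simp add: p2a_def path_len_def)
lemma pe_p2b: "path_edges p2b = {{12,0},{0,1},{1,25},{25,26},{26,27},{27,28},{28,29},{29,30},{30,31},{31,32},{32,33},{33,34},{34,35},{35,13}}"
  by (simp add: p2b_def pe_cons2 pe_one)
lemma pl_p2b: "path_len p2b = 14"
  by (simp add: p2b_def path_len_def)
lemma pe_p3a: "path_edges p3a = {{14,2},{2,3},{3,38},{38,39},{39,40},{40,41},{41,42},{42,43},{43,44},{44,45},{45,46},{46,47},{47,48},{48,15}}"
  by (simp add: p3a_def pe_cons2 pe_one)
lemma pl_p3a: "path_len p3a = 14"
  by (simp add: p3a_def path_len_def)
lemma pe_p3b: "path_edges p3b = {{14,0},{0,1},{1,36},{36,4},{4,5},{5,37},{37,6},{6,7},{7,15}}"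
  by (simp add: p3b_def pe_cons2 pe_one)
lemma pl_p3b: "path_len p3b = 9"
  by (simp add: p3b_def path_len_def)

lemmas comp3 = sc_rr1 sc_rr1' sc_rr2 sc_rr3 ec_rr pe_p1a pl_p1a pe_p1b pl_p1b pe_p2a pl_p2a pe_p2b pl_p2b pe_p3a pl_p3a pe_p3b pl_p3b doubleton_eq_iff

lemma dev_000: "sum_cost 16 (rr p1a p2b p3a) 2 < sum_cost 16 (rr p1a p2a p3a) 2"
  by (simp add: comp3)
lemma dev_001: "sum_cost 16 (rr p1a p2b p3b) 2 < sum_cost 16 (rr p1a p2a p3b) 2"
  by (simp add: comp3)
lemma dev_010: "sum_cost 16 (rr p1b p2b p3a) 1 < sum_cost 16 (rr p1a p2b p3a) 1"
  by (simp add: comp3)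
lemma dev_011: "sum_cost 16 (rr p1a p2b p3a) 3 < sum_cost 16 (rr p1a p2b p3b) 3"
  by (simp add: comp3)
lemma dev_100: "sum_cost 16 (rr p1b p2a p3b) 3 < sum_cost 16 (rr p1b p2a p3a) 3"
  by (simp add: comp3)
lemma dev_101: "sum_cost 16 (rr p1a p2a p3b) 1 < sum_cost 16 (rr p1b p2a p3b) 1"
  by (simp add: comp3)
lemma dev_110: "sum_cost 16 (rr p1b p2a p3a) 2 < sum_cost 16 (rr p1b p2b p3a) 2"
  by (simp add: comp3)
lemma dev_111: "sum_cost 16 (rr p1b p2a p3b) 2 < sum_cost 16 (rr p1b p2b p3b) 2"
  by (simp add: comp3)

definition PP :: "nat \<Rightarrow> nat list set" where
  "PP j = (if j = 1 then {p1a,p1b} else if j = 2 then {p2a,p2b} else if j = 3 then {p3a,p3b} else {bg j})"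
definition uu :: "nat \<Rightarrow> nat" where "uu j = hd (rr p1a p2a p3a j)"
definition vv :: "nat \<Rightarrow> nat" where "vv j = last (rr p1a p2a p3a j)"
definition GG :: "nat set set" where
  "GG = \<Union> (path_edges ` {p1a,p1b,p2a,p2b,p3a,p3b,[4,5],[6,7],[8,9]})"

lemma pe_image: "path_edges xs = (\<lambda>k. {xs ! k, xs ! Suc k}) ` {k. Suc k < length xs}"
  unfolding path_edges_def by auto

lemma pe_finite: "finite (path_edges xs)"
  unfolding pe_image by (rule finite_imageI, rule finite_subset[of _ "{..<length xs}"]) auto

lemma pe_card: "distinct xs \<Longrightarrow> e \<in> path_edges xs \<Longrightarrow> card e = 2"
  unfolding path_edges_def
proof safe
  fix k assume d: "distinct xs" and k: "Suc k < length xs"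
  then have "xs ! k \<noteq> xs ! Suc k" by (simp add: nth_eq_iff_index_eq)
  then show "card {xs ! k, xs ! Suc k} = 2" by simp
qed

lemma pe_mem: "Suc k < length xs \<Longrightarrow> {xs ! k, xs ! Suc k} \<in> path_edges xs"
  unfolding path_edges_def by blast

lemma is_path_gen: "xs \<noteq> [] \<Longrightarrow> distinct xs \<Longrightarrow> path_edges xs \<subseteq> G \<Longrightarrow> is_path G (hd xs) (last xs) xs"
  unfolding is_path_def using pe_mem by (metis subsetD)

lemma allpaths_distinct: "p \<in> {p1a,p1b,p2a,p2b,p3a,p3b,[4,5],[6,7],[8,9]} \<Longrightarrow> distinct p \<and> p \<noteq> []"
  by (auto simp: p1a_def p1b_def p2a_def p2b_def p3a_def p3b_def)

lemma graph_GG: "graph GG"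
  unfolding graph_def
proof
  show "finite GG" unfolding GG_def by (intro finite_Union) (auto simp: pe_finite)
  show "\<forall>e\<in>GG. card e = 2"
  proof
    fix e assume "e \<in> GG"
    then obtain p where p: "p \<in> {p1a,p1b,p2a,p2b,p3a,p3b,[4,5],[6,7],[8,9]}" and e: "e \<in> path_edges p"
      unfolding GG_def by blast
    show "card e = 2" using pe_card[OF conjunct1[OF allpaths_distinct[OF p]] e] .
  qed
qed

lemma PP_sub: "p \<in> PP i \<Longrightarrow> p \<in> {p1a,p1b,p2a,p2b,p3a,p3b,[4,5],[6,7],[8,9]}"
  by (auto simp: PP_def bg_def split: if_splits)

lemma PP_hd_last: "i \<in> {1..16} \<Longrightarrow> p \<in> PP i \<Longrightarrow> hd p = uu i \<and> last p = vv i"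
  by (auto simp: PP_def uu_def vv_def rr_def p1a_def p1b_def p2a_def p2b_def p3a_def p3b_def split: if_splits)

lemma game: "routing_game 16 GG uu vv PP"
  unfolding routing_game_def
proof (intro conjI ballI graph_GG)
  fix i p assume i: "i \<in> {1..(16::nat)}"
  show "PP i \<noteq> {}" "finite (PP i)" by (auto simp: PP_def)
  assume p: "p \<in> PP i"
  have "path_edges p \<subseteq> GG" using PP_sub[OF p] unfolding GG_def by blast
  then have "is_path GG (hd p) (last p) p" using allpaths_distinct[OF PP_sub[OF p]] is_path_gen by blast
  then show "is_path GG (uu i) (vv i) p" using PP_hd_last[OF i p] by simp
qed

lemma edge_cong_agree: "\<forall>j\<in>{1..N}. r j = r' j \<Longrightarrow> edge_cong N r = edge_cong N r'"
  unfolding edge_cong_def by (intro ext arg_cong[where f=card]) auto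

lemma cost_agree: "\<forall>j\<in>{1..N}. r j = r' j \<Longrightarrow> i \<in> {1..N} \<Longrightarrow> sum_cost N r i = sum_cost N r' i"
  unfolding sum_cost_def player_cong_def using edge_cong_agree[of N r r'] by simp

lemma no_nash: "\<not> nash_routing_sum 16 PP r"
proof
  assume H: "nash_routing_sum 16 PP r"
  then have R: "\<forall>i\<in>{1..16}. r i \<in> PP i" and C: "\<forall>i\<in>{1..16}. \<forall>p\<in>PP i. sum_cost 16 r i \<le> sum_cost 16 (r(i := p)) i"
    unfolding nash_routing_sum_def is_routing_def by auto
  define a where "a = r 1"
  define b where "b = r 2"
  define c where "c = r 3"
  have "r 1 \<in> PP 1" using R by simp
  then have a: "a \<in> {p1a,p1b}" using a_def by (simp add: PP_def)
  have "r 2 \<in> PP 2" using R by simp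
  then have b: "b \<in> {p2a,p2b}" using b_def by (simp add: PP_def)
  have "r 3 \<in> PP 3" using R by simp
  then have c: "c \<in> {p3a,p3b}" using c_def by (simp add: PP_def)
  have ag: "\<forall>j\<in>{1..16}. r j = rr a b c j"
  proof
    fix j :: nat assume j: "j \<in> {1..16}"
    show "r j = rr a b c j"
    proof (cases "j \<le> 3")
      case True then show ?thesis using j a_def b_def c_def rr_def by (auto simp: le_Suc_eq numeral_3_eq_3)
    next
      case False then have "r j \<in> PP j" using R j by auto
      then show ?thesis using False by (auto simp: PP_def rr_def)
    qed
  qed
  have C1: "\<And>p. p \<in> {p1a,p1b} \<Longrightarrow> sum_cost 16 (rr a b c) 1 \<le> sum_cost 16 (rr p b c) 1"
  proof -
    fix p assume p: "p \<in> {p1a,p1b}"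
    have "\<forall>j\<in>{1..16}. (r(1 := p)) j = rr p b c j" using ag by (auto simp: rr_def)
    then have e2: "sum_cost 16 (r(1 := p)) 1 = sum_cost 16 (rr p b c) 1"
      by (rule cost_agree) simp
    have e1: "sum_cost 16 r 1 = sum_cost 16 (rr a b c) 1" by (rule cost_agree[OF ag]) simp
    have i1: "(1::nat) \<in> {1..16}" by simp
    have pp: "p \<in> PP 1" using p by (simp add: PP_def)
    have "sum_cost 16 r 1 \<le> sum_cost 16 (r(1 := p)) 1" using C i1 pp by blast
    then show "sum_cost 16 (rr a b c) 1 \<le> sum_cost 16 (rr p b c) 1" using e1 e2 by simp
  qed
  have C2: "\<And>p. p \<in> {p2a,p2b} \<Longrightarrow> sum_cost 16 (rr a b c) 2 \<le> sum_cost 16 (rr a p c) 2"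
  proof -
    fix p assume p: "p \<in> {p2a,p2b}"
    have "\<forall>j\<in>{1..16}. (r(2 := p)) j = rr a p c j" using ag by (auto simp: rr_def)
    then have e2: "sum_cost 16 (r(2 := p)) 2 = sum_cost 16 (rr a p c) 2"
      by (rule cost_agree) simp
    have e1: "sum_cost 16 r 2 = sum_cost 16 (rr a b c) 2" by (rule cost_agree[OF ag]) simp
    have i1: "(2::nat) \<in> {1..16}" by simp
    have pp: "p \<in> PP 2" using p by (simp add: PP_def)
    have "sum_cost 16 r 2 \<le> sum_cost 16 (r(2 := p)) 2" using C i1 pp by blast
    then show "sum_cost 16 (rr a b c) 2 \<le> sum_cost 16 (rr a p c) 2" using e1 e2 by simp
  qed
  have C3: "\<And>p. p \<in> {p3a,p3b} \<Longrightarrow> sum_cost 16 (rr a b c) 3 \<le> sum_cost 16 (rr a b p) 3"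
  proof -
    fix p assume p: "p \<in> {p3a,p3b}"
    have "\<forall>j\<in>{1..16}. (r(3 := p)) j = rr a b p j" using ag by (auto simp: rr_def)
    then have e2: "sum_cost 16 (r(3 := p)) 3 = sum_cost 16 (rr a b p) 3"
      by (rule cost_agree) simp
    have e1: "sum_cost 16 r 3 = sum_cost 16 (rr a b c) 3" by (rule cost_agree[OF ag]) simp
    have i1: "(3::nat) \<in> {1..16}" by simp
    have pp: "p \<in> PP 3" using p by (simp add: PP_def)
    have "sum_cost 16 r 3 \<le> sum_cost 16 (r(3 := p)) 3" using C i1 pp by blast
    then show "sum_cost 16 (rr a b c) 3 \<le> sum_cost 16 (rr a b p) 3" using e1 e2 by simp
  qed
  show False
    using a b c C1[of p1a] C1[of p1b] C2[of p2a] C2[of p2b] C3[of p3a] C3[of p3b]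
      dev_000 dev_001 dev_010 dev_011 dev_100 dev_101 dev_110 dev_111
    by fastforce
qed

theorem mainTheorem8:
  shows "\<exists>N G u v P. N \<ge> 1 \<and> routing_game N G u v P \<and> \<not> (\<exists>r. nash_routing_sum N P r)"
  using game no_nash by (intro exI[of _ "16::nat"] exI[of _ GG] exI[of _ uu] exI[of _ vv] exI[of _ PP]) auto

end
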